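(* Let $\eta$ be a formal differential operator on $\mathcal{P}_c$, $\eta(y)=\sum_{k=0}^\infty M_k y^{(k)}$, where each $M_k$ is a complex polynomial with $\deg M_k\le k$ ($M_0$ a constant); for $k\in\mathbb{N}$ write $M_k=m_{kk}x^k+R_{k-1}$ with $\deg R_{k-1}\le k-1$. Let $d=(d_j)_{j\in\mathbb{N}_0}$ be a sequence of complex scalars, let $n\in\mathbb{N}$, and assume $d_n-d_0=\sum_{k=1}^n p(n,k)\,m_{kk}$. Assume that there are polynomials $p_0\equiv 1,p_1,\dots,p_{n-1}$ with $\deg p_r=r$ and $\eta p_r=d_rp_r$ for $0\le r\le n-1$. Let $(\alpha_j^{n-1})_{j=0}^{n-1}$ be the scalars with $\sum_{k=1}^n p(n,k)R_{k-1}x^{n-k}=\sum_{j=0}^{n-1}\alpha_j^{n-1}p_j$. Then there exists a polynomial $p_n=x^n+q_{n-1}$ with $\deg q_{n-1}\le n-1$ and $\eta p_n=d_np_n$ if and only if there exists an $n$-tuple of scalars $(\beta_j^{n-1})_{j=0}^{n-1}$ such that $(d_n-d_j)\beta_j^{n-1}=\alpha_j^{n-1}$ for all $0\le j\le n-1$.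
   Context: $\mathcal{P}_c$ is the space of polynomials in one real variable with complex coefficients; $y^{(k)}$ is the $k$-th derivative. For $n\in\mathbb{N}$ and $1\le r\le n$, $p(n,r)=\frac{n!}{(n-r)!}$. *)

theory Defs
  imports "HOL-Computational_Algebra.Polynomial"
begin

text \<open>Formal differential operator eta(y) = sum_k M_k * y^(k). For a polynomial y
  all derivatives of order > degree y vanish, so the sum is finite.\<close>
definition diff_op :: "(nat \<Rightarrow> complex poly) \<Rightarrow> complex poly \<Rightarrow> complex poly" where
  "diff_op M y = (\<Sum>k\<le>degree y. M k * (pderiv ^^ k) y)"

definition pnr :: "nat \<Rightarrow> nat \<Rightarrow> nat" where
  "pnr n r = fact n div fact (n - r)"

text \<open>Leading coefficient m_kk and remainder R_{k-1} of M_k = m_kk x^k + R_{k-1}\<close>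
definition mkk :: "(nat \<Rightarrow> complex poly) \<Rightarrow> nat \<Rightarrow> complex" where
  "mkk M k = coeff (M k) k"

definition Rk :: "(nat \<Rightarrow> complex poly) \<Rightarrow> nat \<Rightarrow> complex poly" where
  "Rk M k = M k - monom (coeff (M k) k) k"

end

theory Submission
  imports Defs
begin

lemma hpd_zero:
  fixes y :: "complex poly"
  assumes "k > degree y" shows "(pderiv ^^ k) y = 0"
proof -
  have "coeff ((pderiv ^^ k) y) i = 0" for i
    using assms by (simp add: coeff_higher_pderiv coeff_eq_0)
  thus ?thesis by (simp add: poly_eq_iff)
qed

lemma diff_op_ext:
  assumes "degree y \<le> N"
  shows "diff_op M y = (\<Sum>k\<le>N. M k * (pderiv ^^ k) y)"
proof -
  have "(\<Sum>k\<le>N. M k * (pderiv ^^ k) y) = (\<Sum>k\<le>degree y. M k * (pderiv ^^ k) y)"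
    by (rule sum.mono_neutral_right) (use assms hpd_zero in auto)
  thus ?thesis by (simp add: diff_op_def)
qed

lemma diff_op_add: "diff_op M (a + b) = diff_op M a + diff_op M b"
proof -
  define N where "N = max (degree a) (degree b)"
  have "diff_op M (a+b) = (\<Sum>k\<le>N. M k * (pderiv ^^ k) (a+b))"
    by (rule diff_op_ext) (simp add: N_def degree_add_le)
  also have "\<dots> = (\<Sum>k\<le>N. M k * (pderiv ^^ k) a) + (\<Sum>k\<le>N. M k * (pderiv ^^ k) b)"
    by (simp add: higher_pderiv_add distrib_left sum.distrib)
  also have "\<dots> = diff_op M a + diff_op M b"
    using diff_op_ext[of a N M] diff_op_ext[of b N M] by (simp add: N_def)
  finally show ?thesis .
qed

lemma smult_sum_right: "smult c (\<Sum>i\<in>A. f i) = (\<Sum>i\<in>A. smult c (f i))"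
  by (induction A rule: infinite_finite_induct) (simp_all add: smult_add_right)

lemma diff_op_smult: "diff_op M (smult c a) = smult c (diff_op M a)"
proof -
  have "diff_op M (smult c a) = (\<Sum>k\<le>degree a. M k * (pderiv ^^ k) (smult c a))"
    by (rule diff_op_ext) simp
  thus ?thesis by (simp add: diff_op_def higher_pderiv_smult smult_sum_right)
qed

lemma diff_op_0: "diff_op M 0 = 0"
  by (simp add: diff_op_def)

lemma diff_op_sum: "diff_op M (\<Sum>j\<in>A. f j) = (\<Sum>j\<in>A. diff_op M (f j))"
  by (induction A rule: infinite_finite_induct) (simp_all add: diff_op_0 diff_op_add)

lemma pnr_Suc:
  assumes "Suc k \<le> n" shows "pnr n (Suc k) = pnr n k * (n - k)"
proof -
  have e: "n - k = Suc (n - Suc k)" using assms by simp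
  define a where "a = (fact (n - Suc k) :: nat)"
  have a0: "a > 0" by (simp add: a_def)
  have f: "fact (n - k) = (n - k) * a"
    unfolding a_def by (subst e, subst fact_Suc) (simp add: e)
  obtain t where t: "fact n = fact (n - k) * (t::nat)"
    using fact_dvd[of "n-k" n] by (auto elim: dvdE)
  have "pnr n k = t" unfolding pnr_def t by simp
  moreover have "pnr n (Suc k) = (n-k) * t" unfolding pnr_def t f a_def[symmetric]
    using a0 by simp
  ultimately show ?thesis by simp
qed

lemma hpd_monom:
  "k \<le> n \<Longrightarrow> (pderiv ^^ k) (monom (1::complex) n) = monom (of_nat (pnr n k)) (n - k)"
proof (induction k)
  case 0 thus ?case by (simp add: pnr_def)
next
  case (Suc k)
  have "(pderiv ^^ Suc k) (monom (1::complex) n) = pderiv (monom (of_nat (pnr n k)) (n - k))"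
    using Suc by simp
  also have "\<dots> = monom (of_nat (pnr n (Suc k))) (n - Suc k)"
    using Suc by (simp add: pderiv_monom pnr_Suc mult.commute)
  finally show ?case .
qed

lemma span_p:
  fixes p :: "nat \<Rightarrow> complex poly"
  assumes p0: "p 0 = 1" and deg: "\<And>r. r \<le> m \<Longrightarrow> degree (p r) = r"
  shows "degree q \<le> m \<Longrightarrow> \<exists>c. q = (\<Sum>j=0..m. smult (c j) (p j))"
  using deg
proof (induction m arbitrary: q)
  case 0
  hence "q = smult (coeff q 0) (p 0)" using p0
    by (metis degree_0_id le_zero_eq mult.right_neutral smult_one smult_smult)
  thus ?case by auto
next
  case (Suc m)
  have dm: "degree (p (Suc m)) = Suc m" using Suc.prems by simp
  hence pz: "coeff (p (Suc m)) (Suc m) \<noteq> 0"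
    by (metis leading_coeff_0_iff degree_0 nat.distinct(1))
  define a where "a = coeff q (Suc m) / lead_coeff (p (Suc m))"
  define q' where "q' = q - smult a (p (Suc m))"
  have "degree q' \<le> m"
  proof (rule degree_le, intro allI impI)
    fix i assume i: "m < i"
    show "coeff q' i = 0"
    proof (cases "i = Suc m")
      case True thus ?thesis using pz dm by (simp add: q'_def a_def)
    next
      case False
      hence "i > Suc m" using i by simp
      hence "coeff q i = 0" "coeff (p (Suc m)) i = 0" using Suc.prems(1) dm
        by (auto intro: coeff_eq_0)
      thus ?thesis by (simp add: q'_def)
    qed
  qed
  then obtain c where c: "q' = (\<Sum>j=0..m. smult (c j) (p j))"
    using Suc.IH Suc.prems by auto
  define c' where "c' = c(Suc m := a)"
  have "(\<Sum>j=0..Suc m. smult (c' j) (p j)) = (\<Sum>j=0..m. smult (c j) (p j)) + smult a (p (Suc m))"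
    by (simp add: c'_def)
  also have "\<dots> = q" by (simp add: c[symmetric] q'_def)
  finally show ?case by metis
qed

lemma indep_p:
  fixes p :: "nat \<Rightarrow> complex poly"
  assumes p0: "p 0 = 1" and deg: "\<And>r. r \<le> m \<Longrightarrow> degree (p r) = r"
  shows "(\<Sum>j=0..m. smult (c j) (p j)) = 0 \<Longrightarrow> \<forall>j\<le>m. c j = 0"
  using deg
proof (induction m)
  case 0 thus ?case using p0 by simp
next
  case (Suc m)
  have dm: "degree (p (Suc m)) = Suc m" using Suc.prems by simp
  hence pz: "lead_coeff (p (Suc m)) \<noteq> 0"
    by (metis leading_coeff_0_iff degree_0 nat.distinct(1))
  have "coeff (\<Sum>j=0..m. smult (c j) (p j)) (Suc m) = 0"
    unfolding coeff_sum
    by (rule sum.neutral) (use Suc.prems(2) in \<open>auto intro!: coeff_eq_0\<close>)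
  moreover have "coeff (\<Sum>j=0..Suc m. smult (c j) (p j)) (Suc m) = 0"
    using Suc.prems(1) by simp
  ultimately have "c (Suc m) * lead_coeff (p (Suc m)) = 0"
    using dm by simp
  hence cs: "c (Suc m) = 0" using pz by simp
  hence "(\<Sum>j=0..m. smult (c j) (p j)) = 0" using Suc.prems(1) by simp
  hence "\<forall>j\<le>m. c j = 0" using Suc.IH Suc.prems(2) by simp
  thus ?case using cs le_Suc_eq by auto
qed

lemma monom_eval:
  fixes M :: "nat \<Rightarrow> complex poly" and d :: "nat \<Rightarrow> complex"
  assumes M0: "M 0 = [:d 0:]"
    and dn: "d n - d 0 = (\<Sum>k=1..n. of_nat (pnr n k) * mkk M k)"
  shows "diff_op M (monom 1 n) = smult (d n) (monom 1 n)
           + (\<Sum>k=1..n. smult (of_nat (pnr n k)) (Rk M k * monom 1 (n - k)))"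
proof -
  have trm: "M k * (pderiv ^^ k) (monom 1 n) =
     monom (of_nat (pnr n k) * mkk M k) n + smult (of_nat (pnr n k)) (Rk M k * monom 1 (n - k))"
    if "k \<le> n" for k
  proof -
    have Mk: "M k = monom (mkk M k) k + Rk M k" by (simp add: Rk_def mkk_def)
    have "monom (of_nat (pnr n k)) (n - k) = smult (of_nat (pnr n k)) (monom (1::complex) (n-k))"
      by (simp add: smult_monom)
    moreover have "monom (mkk M k) k * monom (1::complex) (n - k) = monom (mkk M k) n"
      using that by (simp add: mult_monom)
    ultimately have "M k * (pderiv ^^ k) (monom 1 n) =
       (monom (mkk M k) k + Rk M k) * smult (of_nat (pnr n k)) (monom 1 (n - k))"
      using that by (simp add: hpd_monom Mk)
    also have "\<dots> = smult (of_nat (pnr n k)) (monom (mkk M k) k * monom 1 (n - k))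
        + smult (of_nat (pnr n k)) (Rk M k * monom 1 (n - k))"
      by (simp add: distrib_right mult_smult_right smult_add_right)
    also have "\<dots> = monom (of_nat (pnr n k) * mkk M k) n
        + smult (of_nat (pnr n k)) (Rk M k * monom 1 (n - k))"
      using \<open>monom (mkk M k) k * monom (1::complex) (n - k) = monom (mkk M k) n\<close>
      by (simp add: smult_monom)
    finally show ?thesis .
  qed
  have "diff_op M (monom 1 n) = (\<Sum>k\<le>n. M k * (pderiv ^^ k) (monom 1 n))"
    by (simp add: diff_op_def degree_monom_eq)
  also have "\<dots> = M 0 * monom 1 n + (\<Sum>k=1..n. M k * (pderiv ^^ k) (monom 1 n))"
    by (simp add: atMost_atLeast0 sum.atLeast_Suc_atMost)
  also have "(\<Sum>k=1..n. M k * (pderiv ^^ k) (monom 1 n)) =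
     (\<Sum>k=1..n. monom (of_nat (pnr n k) * mkk M k) n)
       + (\<Sum>k=1..n. smult (of_nat (pnr n k)) (Rk M k * monom 1 (n - k)))"
    by (simp add: trm sum.distrib)
  also have "(\<Sum>k=1..n. monom (of_nat (pnr n k) * mkk M k) n) = monom (d n - d 0) n"
    by (simp add: dn monom_sum)
  finally show ?thesis using M0
    by (simp add: monom_altdef add.assoc flip: smult_add_left)
qed

theorem proposition1:
  fixes M :: "nat \<Rightarrow> complex poly" and d :: "nat \<Rightarrow> complex" and n :: nat
    and p :: "nat \<Rightarrow> complex poly" and \<alpha> :: "nat \<Rightarrow> complex"
  assumes degM: "\<And>k. degree (M k) \<le> k"
    and n_pos: "n \<ge> 1"
    and dn: "d n - d 0 = (\<Sum>k=1..n. of_nat (pnr n k) * mkk M k)"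
    and p0: "p 0 = 1"
    and deg_p: "\<And>r. r \<le> n - 1 \<Longrightarrow> degree (p r) = r"
    and eig_p: "\<And>r. r \<le> n - 1 \<Longrightarrow> diff_op M (p r) = smult (d r) (p r)"
    and alpha: "(\<Sum>k=1..n. smult (of_nat (pnr n k)) (Rk M k * monom 1 (n - k)))
                  = (\<Sum>j=0..n-1. smult (\<alpha> j) (p j))"
  shows "(\<exists>pn q. pn = monom 1 n + q \<and> degree q \<le> n - 1 \<and> diff_op M pn = smult (d n) pn)
     \<longleftrightarrow> (\<exists>\<beta> :: nat \<Rightarrow> complex. \<forall>j\<in>{0..n-1}. (d n - d j) * \<beta> j = \<alpha> j)"
proof -
  have "diff_op M (p 0) = M 0" by (simp add: p0 diff_op_def)
  hence M0: "M 0 = [:d 0:]" using eig_p[of 0] p0 by simp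
  have key: "diff_op M (monom 1 n + (\<Sum>j=0..n-1. smult (c j) (p j)))
      - smult (d n) (monom 1 n + (\<Sum>j=0..n-1. smult (c j) (p j)))
      = (\<Sum>j=0..n-1. smult (\<alpha> j - (d n - d j) * c j) (p j))" for c
  proof -
    have "diff_op M (\<Sum>j=0..n-1. smult (c j) (p j)) = (\<Sum>j=0..n-1. smult (c j * d j) (p j))"
      by (simp add: diff_op_sum diff_op_smult eig_p)
    hence "diff_op M (monom 1 n + (\<Sum>j=0..n-1. smult (c j) (p j)))
      - smult (d n) (monom 1 n + (\<Sum>j=0..n-1. smult (c j) (p j)))
      = (\<Sum>j=0..n-1. smult (\<alpha> j) (p j)) + (\<Sum>j=0..n-1. smult (c j * d j) (p j))
        - (\<Sum>j=0..n-1. smult (d n * c j) (p j))"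
      by (simp only: diff_op_add monom_eval[OF M0 dn] alpha smult_add_right smult_sum_right
          smult_smult) (simp add: algebra_simps)
    also have "\<dots> = (\<Sum>j=0..n-1. smult (\<alpha> j) (p j) + smult (c j * d j) (p j) - smult (d n * c j) (p j))"
      by (simp add: sum.distrib sum_subtractf)
    also have "\<dots> = (\<Sum>j=0..n-1. smult (\<alpha> j - (d n - d j) * c j) (p j))"
      by (rule sum.cong) (simp_all add: algebra_simps flip: smult_add_left smult_diff_left)
    finally show ?thesis .
  qed
  show ?thesis
  proof
    assume "\<exists>pn q. pn = monom 1 n + q \<and> degree q \<le> n - 1 \<and> diff_op M pn = smult (d n) pn"
    then obtain q where q: "degree q \<le> n - 1"
      and e: "diff_op M (monom 1 n + q) = smult (d n) (monom 1 n + q)" by blast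
    obtain c where c: "q = (\<Sum>j=0..n-1. smult (c j) (p j))"
      using span_p[OF p0 deg_p q] by blast
    have "(\<Sum>j=0..n-1. smult (\<alpha> j - (d n - d j) * c j) (p j)) = 0"
      using key[of c] e c by simp
    hence "\<forall>j\<le>n-1. \<alpha> j - (d n - d j) * c j = 0"
      using indep_p[of p "n-1" "\<lambda>j. \<alpha> j - (d n - d j) * c j", OF p0 deg_p] by blast
    thus "\<exists>\<beta> :: nat \<Rightarrow> complex. \<forall>j\<in>{0..n-1}. (d n - d j) * \<beta> j = \<alpha> j"
      by auto
  next
    assume "\<exists>\<beta> :: nat \<Rightarrow> complex. \<forall>j\<in>{0..n-1}. (d n - d j) * \<beta> j = \<alpha> j"
    then obtain \<beta> :: "nat \<Rightarrow> complex" where b: "\<forall>j\<in>{0..n-1}. (d n - d j) * \<beta> j = \<alpha> j" by blast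
    define q where "q = (\<Sum>j=0..n-1. smult (\<beta> j) (p j))"
    have dq: "degree q \<le> n - 1" unfolding q_def
      by (rule degree_sum_le) (auto intro: order.trans[OF degree_smult_le] simp: deg_p)
    have "(\<Sum>j=0..n-1. smult (\<alpha> j - (d n - d j) * \<beta> j) (p j)) = 0"
      by (rule sum.neutral) (use b in auto)
    hence "diff_op M (monom 1 n + q) = smult (d n) (monom 1 n + q)"
      using key[of \<beta>] unfolding q_def by simp
    thus "\<exists>pn q. pn = monom 1 n + q \<and> degree q \<le> n - 1 \<and> diff_op M pn = smult (d n) pn"
      using dq by blast
  qed
qed

end
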